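(* Let $(n_k)_{k\ge0}$ be a strictly increasing sequence of positive integers such that $n_k$ divides $n_{k+1}$ for every $k\ge0$ and $\limsup_{k\to\infty}n_{k+1}/n_k=+\infty$. Then there exists a compact perfect subset $K$ of $\mathbb{T}$ containing the point $1$ such that $\lambda^{n_k}\to1$ uniformly on $K$.
   Context: $\mathbb{T}$ is the unit circle in $\mathbb{C}$. *)

theory Defs
  imports "HOL-Analysis.Analysis"
begin

end

theory Submission
  imports Defs
begin

lemma expB: "cmod (exp (\<i> * of_real t) - 1) \<le> \<bar>t\<bar>"
proof -
  have "(cmod (exp (\<i> * of_real t) - 1))^2 = (cos t - 1)^2 + (sin t)^2"
    by (simp add: exp_Euler cmod_power2 cos_of_real sin_of_real)
  also have "\<dots> = 4 * (sin (t/2))^2"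
    using cos_double_sin[of "t/2"] sin_cos_squared_add[of t] by (simp add: power2_eq_square algebra_simps)
  also have "\<dots> \<le> t^2"
  proof -
    have "\<bar>sin (t/2)\<bar> \<le> \<bar>t/2\<bar>" by (rule abs_sin_x_le_abs_x)
    then have "(sin (t/2))^2 \<le> (t/2)^2"
      by (metis abs_ge_zero power2_abs power_mono)
    then show ?thesis by (simp add: power2_eq_square)
  qed
  finally have "(cmod (exp (\<i> * of_real t) - 1))^2 \<le> \<bar>t\<bar>^2" by simp
  then show ?thesis using abs_ge_zero power2_le_imp_le by blast
qed

lemma prod_minus1:
  assumes "finite F" "\<And>j. j \<in> F \<Longrightarrow> cmod (a j) = 1"
  shows "cmod ((\<Prod>j\<in>F. a j) - 1) \<le> (\<Sum>j\<in>F. cmod (a j - 1))"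
  using assms
proof (induction F rule: finite_induct)
  case empty then show ?case by simp
next
  case (insert x F)
  have "(\<Prod>j\<in>insert x F. a j) - 1 = a x * ((\<Prod>j\<in>F. a j) - 1) + (a x - 1)"
    using insert by (simp add: algebra_simps)
  then have "cmod ((\<Prod>j\<in>insert x F. a j) - 1) \<le> cmod (a x) * cmod ((\<Prod>j\<in>F. a j) - 1) + cmod (a x - 1)"
    by (metis norm_mult norm_triangle_ineq)
  also have "\<dots> \<le> (\<Sum>j\<in>F. cmod (a j - 1)) + cmod (a x - 1)"
    using insert by simp
  finally show ?case using insert by (simp add: add.commute)
qed

lemma geo_bound:
  fixes G :: "nat set"
  assumes "finite G" "\<And>j. j \<in> G \<Longrightarrow> N \<le> j"
  shows "(\<Sum>j\<in>G. (1/2::real)^j) \<le> 2 * (1/2)^N"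
proof -
  obtain M where M: "G \<subseteq> {..<M}" using finite_nat_bounded assms(1) by blast
  have sub: "G \<subseteq> {N..<N+M}" using M assms(2) by auto
  have "(\<Sum>j\<in>G. (1/2::real)^j) \<le> (\<Sum>j\<in>{N..<N+M}. (1/2)^j)"
    by (rule sum_mono2[OF _ sub]) auto
  also have "\<And>M. (\<Sum>j\<in>{N..<N+M}. (1/2::real)^j) \<le> 2 * (1/2)^N - 2 * (1/2)^(N+M)"
  proof -
    fix M show "(\<Sum>j\<in>{N..<N+M}. (1/2::real)^j) \<le> 2 * (1/2)^N - 2 * (1/2)^(N+M)"
    proof (induction M)
      case 0 then show ?case by simp
    next
      case (Suc M)
      have "{N..<N + Suc M} = insert (N+M) {N..<N+M}" by auto
      then show ?case using Suc by simp
    qed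
  qed
  also have "2 * (1/2::real)^N - 2 * (1/2)^(N+M) \<le> 2 * (1/2)^N" by simp
  finally show ?thesis .
qed

lemma dvd_chain:
  assumes "\<And>k. n k dvd n (Suc k)" "a \<le> b"
  shows "n a dvd (n b :: nat)"
  using assms(2)
proof (induction b rule: dec_induct)
  case base then show ?case by simp
next
  case (step b) then show ?case using assms(1) dvd_trans by blast
qed

theorem proposition3p7:
  fixes n :: "nat \<Rightarrow> nat"
  assumes "strict_mono n"
    and "\<And>k. 0 < n k"
    and "\<And>k. n k dvd n (Suc k)"
    and "limsup (\<lambda>k. ereal (real (n (Suc k)) / real (n k))) = \<infinity>"
  shows "\<exists>K :: complex set. K \<subseteq> sphere 0 1 \<and> compact K \<and> (\<forall>x\<in>K. x islimpt K)
           \<and> 1 \<in> K \<and> uniform_limit K (\<lambda>k z. z ^ n k) (\<lambda>z. 1) sequentially"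
proof -
  have npos: "\<And>k. 0 < n k" by fact
  have ex: "\<exists>k. B \<le> real (n (Suc k)) / real (n k)" for B :: real
  proof (rule ccontr)
    assume "\<not> (\<exists>k. B \<le> real (n (Suc k)) / real (n k))"
    then have "\<forall>k. ereal (real (n (Suc k)) / real (n k)) \<le> ereal B" by (auto simp: not_le less_imp_le)
    then have "limsup (\<lambda>k. ereal (real (n (Suc k)) / real (n k))) \<le> ereal B"
      by (intro Limsup_bounded) auto
    with assms(4) show False by simp
  qed
  obtain p where p: "\<And>j. (2::real)^j \<le> real (n (Suc (p j))) / real (n (p j))"
  proof -
    have "\<forall>j. \<exists>k. (2::real)^j \<le> real (n (Suc k)) / real (n k)" using ex by blast
    then obtain p where "\<forall>j. (2::real)^j \<le> real (n (Suc (p j))) / real (n (p j))"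
      by (metis choice)
    then show ?thesis using that by blast
  qed
  define m where "m j = n (Suc (p j))" for j
  have mge: "(2::real)^j * real (n (p j)) \<le> real (m j)" for j
    using p[of j] npos[of "p j"] by (simp add: m_def pos_le_divide_eq)
  have m2: "2 \<le> m j" for j
    using strict_monoD[OF assms(1), of "p j" "Suc (p j)"] npos[of "p j"] by (simp add: m_def)
  have mle: "real (n (p j)) / real (m j) \<le> (1/2)^j" for j
  proof -
    have "real (n (p j)) \<le> real (m j) / 2^j" using mge[of j] by (simp add: pos_le_divide_eq mult.commute)
    then show ?thesis using m2[of j] by (simp add: divide_simps power_one_over)
  qed
  define w where "w j = exp (\<i> * of_real (2*pi / real (m j)))" for j
  define z where "z F = (\<Prod>j\<in>F. w j)" for F
  define S where "S = z ` {F. finite F}"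
  define K where "K = closure S"
  have normw: "cmod (w j) = 1" for j by (simp add: w_def)
  have normz: "cmod (z F) = 1" for F by (simp add: z_def prod_norm[symmetric] normw)
  have wne: "w j \<noteq> 1" for j
  proof
    assume "w j = 1"
    then obtain q :: int where q: "2*pi / real (m j) = of_int (2*q) * pi"
      unfolding w_def exp_eq_1 by auto
    then have "pi * (2 / real (m j)) = pi * (2 * of_int q)" by (simp add: mult_ac)
    then have "2 / real (m j) = 2 * of_int q" by (metis mult_cancel_left pi_neq_zero)
    then have "1 / real (m j) = of_int q" by simp
    moreover have "0 < 1 / real (m j)" "1 / real (m j) < 1" using m2[of j] by auto
    ultimately have "0 < (of_int q::real)" "(of_int q::real) < 1" by simp_all
    then have "0 < q" "q < 1" by simp_all
    then show False by simp
  qed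
  have SK: "S \<subseteq> K" unfolding K_def by (rule closure_subset)
  have Ssph: "S \<subseteq> sphere 0 1" by (auto simp: S_def normz)
  have Ksph: "K \<subseteq> sphere 0 1" unfolding K_def by (rule closure_minimal[OF Ssph closed_sphere])
  have Kc: "compact K" unfolding K_def
    by (rule compact_closure[THEN iffD2], rule bounded_subset[OF bounded_sphere Ssph])
  have K1: "1 \<in> K" using SK by (auto simp: S_def z_def image_iff intro!: bexI[of _ "{}"])
  have g0: "(\<lambda>j. 2*pi / real (m j)) \<longlonglongrightarrow> 0"
  proof (rule tendsto_sandwich[of "\<lambda>_. 0" _ _ "\<lambda>j. 2*pi*(1/2)^j"])
    show "\<forall>\<^sub>F j in sequentially. 0 \<le> 2*pi / real (m j)" by simp
    show "\<forall>\<^sub>F j in sequentially. 2*pi / real (m j) \<le> 2*pi*(1/2)^j"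
    proof (intro always_eventually allI)
      fix j
      have "1 / real (m j) \<le> (1/2)^j"
      proof -
        have "1 \<le> real (n (p j))" using npos[of "p j"] by simp
        then have "1 / real (m j) \<le> real (n (p j)) / real (m j)"
          by (rule divide_right_mono) simp
        then show ?thesis using mle[of j] by linarith
      qed
      then have "2*pi * (1 / real (m j)) \<le> 2*pi*(1/2)^j" by (intro mult_left_mono) auto
      then show "2*pi / real (m j) \<le> 2*pi*(1/2)^j" by simp
    qed
    show "(\<lambda>_. 0::real) \<longlonglongrightarrow> 0" by simp
    show "(\<lambda>j. 2*pi*(1/2::real)^j) \<longlonglongrightarrow> 0"
      by (intro tendsto_mult_right_zero LIMSEQ_power_zero) auto
  qed
  have limS: "x islimpt S" if xS: "x \<in> S" for x
  proof -
    obtain F where F: "finite F" "x = z F" using xS by (auto simp: S_def)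
    obtain c where c: "F \<subseteq> {..<c}" using finite_nat_bounded F(1) by blast
    define f where "f j = z (insert (j + c) F)" for j
    have fj: "f j = w (j + c) * z F" for j
    proof -
      have "j + c \<notin> F" using c by auto
      then show ?thesis using F(1) by (simp add: f_def z_def)
    qed
    have "\<forall>j. f j \<in> S - {x}"
    proof
      fix j
      have "f j \<in> S" using F(1) by (auto simp: S_def f_def)
      moreover have "f j \<noteq> x"
      proof
        assume "f j = x"
        then have "w (j+c) * z F = 1 * z F" using F fj by simp
        moreover have "z F \<noteq> 0" using normz[of F] by auto
        ultimately show False using wne by simp
      qed
      ultimately show "f j \<in> S - {x}" by simp
    qed
    moreover have "f \<longlonglongrightarrow> x"
    proof -
      have "(\<lambda>j. 2*pi / real (m (j + c))) \<longlonglongrightarrow> 0"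
        using LIMSEQ_ignore_initial_segment[OF g0, of c] by simp
      then have "(\<lambda>j. w (j + c)) \<longlonglongrightarrow> exp (\<i> * of_real 0)"
        unfolding w_def by (intro tendsto_intros)
      then have "(\<lambda>j. w (j + c) * z F) \<longlonglongrightarrow> 1 * z F" by (intro tendsto_intros) auto
      moreover have "f = (\<lambda>j. w (j + c) * z F)" using fj by (rule ext)
      ultimately show ?thesis using F by simp
    qed
    ultimately show ?thesis unfolding islimpt_sequential by blast
  qed
  have Klim: "\<forall>x\<in>K. x islimpt K"
  proof
    fix x assume "x \<in> K"
    then have "x \<in> S \<or> x islimpt S" unfolding K_def closure_def by auto
    then have "x islimpt S" using limS by blast
    then show "x islimpt K" using islimpt_subset SK by blast
  qed
  have unif: "uniform_limit K (\<lambda>k z. z ^ n k) (\<lambda>z. 1) sequentially"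
    unfolding uniform_limit_iff
  proof (intro allI impI)
    fix e :: real assume e: "0 < e"
    obtain N0 where N0: "(1/2::real)^N0 < e/(8*pi)"
      using real_arch_pow_inv[of "e/(8*pi)" "1/2"] e by auto
    obtain B where B: "p ` {..<N0} \<subseteq> {..<B}" using finite_nat_bounded by blast
    show "\<forall>\<^sub>F k in sequentially. \<forall>x\<in>K. dist (x ^ n k) 1 < e"
      unfolding eventually_sequentially
    proof (intro exI allI impI)
      fix k assume kB: "B \<le> k"
      have termb: "cmod (w j ^ n k - 1) \<le> (if N0 \<le> j then 2*pi*(1/2)^j else 0)" for j
      proof (cases "m j dvd n k")
        case True
        then obtain q where q: "n k = m j * q" by blast
        have "w j ^ m j = exp (of_nat (m j) * (\<i> * of_real (2*pi / real (m j))))"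
          unfolding w_def by (rule exp_of_nat_mult[symmetric])
        also have "\<dots> = exp (2 * pi * \<i>)" using m2[of j] by (simp add: field_simps)
        also have "\<dots> = 1" by simp
        finally have "w j ^ n k = 1" by (simp add: q power_mult)
        then show ?thesis by simp
      next
        case False
        have kp: "k \<le> p j"
        proof (rule ccontr)
          assume "\<not> k \<le> p j"
          then have "Suc (p j) \<le> k" by simp
          then have "m j dvd n k" unfolding m_def by (rule dvd_chain[of n, OF assms(3)])
          with False show False by simp
        qed
        have jN: "N0 \<le> j"
        proof (rule ccontr)
          assume "\<not> N0 \<le> j"
          then have "j \<in> {..<N0}" by simp
          then have "p j \<in> {..<B}" using B by blast
          then have "p j < B" by simp
          with kp kB show False by simp
        qed
        have "w j ^ n k = exp (of_nat (n k) * (\<i> * of_real (2*pi / real (m j))))"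
          unfolding w_def by (rule exp_of_nat_mult[symmetric])
        also have "\<dots> = exp (\<i> * of_real (2*pi * real (n k) / real (m j)))" by (simp add: field_simps)
        finally have "cmod (w j ^ n k - 1) \<le> \<bar>2*pi * real (n k) / real (m j)\<bar>"
          using expB[of "2*pi * real (n k) / real (m j)"] by (simp only:)
        also have "\<dots> = 2*pi * (real (n k) / real (m j))" by simp
        also have "\<dots> \<le> 2*pi * (real (n (p j)) / real (m j))"
          using strict_mono_less_eq[OF assms(1)] kp
          by (intro mult_left_mono divide_right_mono) auto
        also have "\<dots> \<le> 2*pi*(1/2)^j" using mle[of j] by (intro mult_left_mono) auto
        finally show ?thesis using jN by simp
      qed
      have keyS: "cmod (z F ^ n k - 1) \<le> 4*pi*(1/2)^N0" if "finite F" for F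
      proof -
        have "cmod (z F ^ n k - 1) = cmod ((\<Prod>j\<in>F. w j ^ n k) - 1)"
          by (simp add: z_def prod_power_distrib)
        also have "\<dots> \<le> (\<Sum>j\<in>F. cmod (w j ^ n k - 1))"
          by (rule prod_minus1[OF that]) (simp add: norm_power normw)
        also have "\<dots> \<le> (\<Sum>j\<in>F. (if N0 \<le> j then 2*pi*(1/2)^j else 0))"
          by (rule sum_mono) (rule termb)
        also have "\<dots> = 2*pi * (\<Sum>j\<in>{j\<in>F. N0 \<le> j}. (1/2)^j)"
          using that by (simp add: sum.inter_filter[symmetric] sum_distrib_left)
        also have "\<dots> \<le> 2*pi * (2 * (1/2)^N0)"
          by (intro mult_left_mono geo_bound) (use that in auto)
        finally show ?thesis by simp
      qed
      have "S \<subseteq> {x. cmod (x ^ n k - 1) \<le> 4*pi*(1/2)^N0}"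
        using keyS by (auto simp: S_def)
      then have "K \<subseteq> {x. cmod (x ^ n k - 1) \<le> 4*pi*(1/2)^N0}"
        unfolding K_def
        by (rule closure_minimal) (intro closed_Collect_le continuous_intros)
      moreover have "4*pi*(1/2::real)^N0 < e"
      proof -
        have "4*pi*(1/2::real)^N0 < 4*pi*(e/(8*pi))" by (rule mult_strict_left_mono[OF N0]) simp
        also have "\<dots> < e" using e by (simp add: field_simps)
        finally show ?thesis .
      qed
      ultimately show "\<forall>x\<in>K. dist (x ^ n k) 1 < e" by (auto simp: dist_norm)
    qed
  qed
  show ?thesis using Ksph Kc Klim K1 unif by blast
qed

end
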